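(* Let $(X,d)$ be a compact metric space and let $(X,f)$ be a flow or a semiflow on $X$ that has the weak reparametrized gluing orbit property. Then either $(X,f)$ is minimal, or $(X,f)$ has positive topological entropy, i.e. $h(f)>0$.
   Context: A flow (resp. semiflow) on $X$ is a continuous family $\{f^t\}$ of continuous maps $X\to X$ indexed by $t\in\mathbb{R}$ (resp. $t\in[0,\infty)$) with $f^0=\mathrm{id}$ and $f^{t+s}=f^t\circ f^s$. $(X,f)$ is minimal if for every $x\in X$ the forward orbit $\{f^t(x):t\ge 0\}$ is dense in $X$. $h(f)$ denotes the topological entropy of the flow/semiflow (defined via maximal cardinalities of $(t,\epsilon)$-separated sets). For $L\ge 1$, an $L$-reparametrization is a strictly increasing continuous function $\gamma:[0,\infty)\to[0,\infty)$ with $\gamma(0)=0$ and $L^{-1}\le \frac{\gamma(t_1)-\gamma(t_2)}{t_1-t_2}\le L$ for all $t_1\ne t_2$ in $[0,\infty)$. An orbit sequence of rank $k$ is a finite sequence $\mathscr{C}=\{(x_j,m_j)\in X\times[0,\infty):j=1,\dots,k\}$. A gap for it is a $(k-1)$-tuple $\mathscr{g}=\{t_j\in[0,\infty):j=1,\dots,k-1\}$. Given a reparametrization $\gamma$ and $\epsilon>0$, $(\mathscr{C},\mathscr{g},\gamma)$ is $\epsilon$-shadowed by $z\in X$ if for every $j=1,\dots,k$ and every $t\in[0,m_j]$ one has $d(f^{\gamma(s_j+t)}(z),f^t(x_j))<\epsilon$, where $s_1=0$ and $s_j=\sum_{i=1}^{j-1}(m_i+t_i)$ for $j\ge2$. $(X,f)$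 has the weak reparametrized gluing orbit property if for every $\epsilon>0$ there is $M=M(\epsilon)>0$ such that for every orbit sequence $\mathscr{C}$ there exist a gap $\mathscr{g}$ with $\max\mathscr{g}\le M$ and an $M$-reparametrization $\gamma$ such that $(\mathscr{C},\mathscr{g},\gamma)$ is $\epsilon$-shadowed by some point of $X$. *)

theory Defs
  imports "HOL-Analysis.Analysis"
begin

definition is_semiflow :: "'a::metric_space set \<Rightarrow> (real \<Rightarrow> 'a \<Rightarrow> 'a) \<Rightarrow> bool" where
  "is_semiflow X f \<longleftrightarrow>
     continuous_on ({0..} \<times> X) (\<lambda>(t, x). f t x) \<and>
     (\<forall>t\<ge>0. \<forall>x\<in>X. f t x \<in> X) \<and>
     (\<forall>x\<in>X. f 0 x = x) \<and>
     (\<forall>t\<ge>0. \<forall>s\<ge>0. \<forall>x\<in>X. f (t + s) x = f t (f s x))"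

definition is_flow :: "'a::metric_space set \<Rightarrow> (real \<Rightarrow> 'a \<Rightarrow> 'a) \<Rightarrow> bool" where
  "is_flow X f \<longleftrightarrow>
     continuous_on (UNIV \<times> X) (\<lambda>(t, x). f t x) \<and>
     (\<forall>t. \<forall>x\<in>X. f t x \<in> X) \<and>
     (\<forall>x\<in>X. f 0 x = x) \<and>
     (\<forall>t s. \<forall>x\<in>X. f (t + s) x = f t (f s x))"

definition minimal_flow :: "'a::metric_space set \<Rightarrow> (real \<Rightarrow> 'a \<Rightarrow> 'a) \<Rightarrow> bool" where
  "minimal_flow X f \<longleftrightarrow> (\<forall>x\<in>X. X \<subseteq> closure ((\<lambda>t. f t x) ` {0..}))"

definition separated_set :: "'a::metric_space set \<Rightarrow> (real \<Rightarrow> 'a \<Rightarrow> 'a) \<Rightarrow> real \<Rightarrow> real \<Rightarrow> 'a set \<Rightarrow> bool" where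
  "separated_set X f t \<epsilon> E \<longleftrightarrow> E \<subseteq> X \<and> finite E \<and>
     (\<forall>x\<in>E. \<forall>y\<in>E. x \<noteq> y \<longrightarrow> (\<exists>s\<in>{0..t}. dist (f s x) (f s y) > \<epsilon>))"

definition max_sep :: "'a::metric_space set \<Rightarrow> (real \<Rightarrow> 'a \<Rightarrow> 'a) \<Rightarrow> real \<Rightarrow> real \<Rightarrow> ereal" where
  "max_sep X f t \<epsilon> = (SUP E \<in> {E. separated_set X f t \<epsilon> E}. ereal (real (card E)))"

definition growth_rate :: "ereal \<Rightarrow> real \<Rightarrow> ereal" where
  "growth_rate N t = (if N = \<infinity> then \<infinity> else ereal (ln (real_of_ereal N) / t))"

text \<open>h(f) = lim_{\<epsilon>\<rightarrow>0} limsup_{t\<rightarrow>\<infinity>} (1/t) log s(t,\<epsilon>); the inner quantity is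
  nonincreasing in \<epsilon>, so the limit equals the supremum over \<epsilon> > 0.\<close>
definition top_entropy :: "'a::metric_space set \<Rightarrow> (real \<Rightarrow> 'a \<Rightarrow> 'a) \<Rightarrow> ereal" where
  "top_entropy X f = (SUP \<epsilon> \<in> {0<..}. Limsup at_top (\<lambda>t. growth_rate (max_sep X f t \<epsilon>) t))"

definition reparametrization :: "real \<Rightarrow> (real \<Rightarrow> real) \<Rightarrow> bool" where
  "reparametrization L \<gamma> \<longleftrightarrow> L \<ge> 1 \<and> strict_mono_on {0..} \<gamma> \<and> continuous_on {0..} \<gamma> \<and>
     \<gamma> 0 = 0 \<and> (\<forall>t\<ge>0. \<gamma> t \<ge> 0) \<and>
     (\<forall>t1\<ge>0. \<forall>t2\<ge>0. t1 \<noteq> t2 \<longrightarrow>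
        1 / L \<le> (\<gamma> t1 - \<gamma> t2) / (t1 - t2) \<and> (\<gamma> t1 - \<gamma> t2) / (t1 - t2) \<le> L)"

text \<open>Orbit sequence of rank k: (x j, m j) for j < k (0-indexed); gap g j for j < k - 1.\<close>
definition shadowed :: "(real \<Rightarrow> 'a::metric_space \<Rightarrow> 'a) \<Rightarrow> nat \<Rightarrow> (nat \<Rightarrow> 'a) \<Rightarrow> (nat \<Rightarrow> real)
    \<Rightarrow> (nat \<Rightarrow> real) \<Rightarrow> (real \<Rightarrow> real) \<Rightarrow> real \<Rightarrow> 'a \<Rightarrow> bool" where
  "shadowed f k x m g \<gamma> \<epsilon> z \<longleftrightarrow>
     (\<forall>j<k. \<forall>t\<in>{0..m j}.
        dist (f (\<gamma> ((\<Sum>i<j. m i + g i) + t)) z) (f t (x j)) < \<epsilon>)"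

definition weak_reparam_gluing :: "'a::metric_space set \<Rightarrow> (real \<Rightarrow> 'a \<Rightarrow> 'a) \<Rightarrow> bool" where
  "weak_reparam_gluing X f \<longleftrightarrow>
     (\<forall>\<epsilon>>0. \<exists>M>0. \<forall>k::nat. \<forall>x m. k \<ge> 1 \<longrightarrow> (\<forall>j<k. x j \<in> X \<and> m j \<ge> 0) \<longrightarrow>
        (\<exists>g \<gamma> z. (\<forall>j<k - 1. 0 \<le> g j \<and> g j \<le> M) \<and> reparametrization M \<gamma> \<and>
                  z \<in> X \<and> shadowed f k x m g \<gamma> \<epsilon> z))"

end

theory Submission imports Defs begin

lemma rep_lip:
  assumes "reparametrization M \<gamma>" "0 \<le> u" "u \<le> v"
  shows "(v-u)/M \<le> \<gamma> v - \<gamma> u \<and> \<gamma> v - \<gamma> u \<le> M*(v-u)"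
proof (cases "u = v")
  case True thus ?thesis by simp
next
  case False
  from assms(1) have L: "\<forall>t1\<ge>0. \<forall>t2\<ge>0. t1 \<noteq> t2 \<longrightarrow>
        1 / M \<le> (\<gamma> t1 - \<gamma> t2) / (t1 - t2) \<and> (\<gamma> t1 - \<gamma> t2) / (t1 - t2) \<le> M" and M1: "M \<ge> 1"
    unfolding reparametrization_def by auto
  have vu: "v - u > 0" using False assms by auto
  have h1: "1/M \<le> (\<gamma> v - \<gamma> u)/(v-u)" and h2: "(\<gamma> v - \<gamma> u)/(v-u) \<le> M"
    using L assms False by auto
  from h1 vu M1 have "(v-u)/M \<le> \<gamma> v - \<gamma> u"
    by (simp add: divide_simps mult.commute)
  moreover from h2 vu have "\<gamma> v - \<gamma> u \<le> M*(v-u)"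
    by (simp add: divide_simps mult.commute)
  ultimately show ?thesis by simp
qed

definition ssum :: "(nat \<Rightarrow> real) \<Rightarrow> (nat \<Rightarrow> real) \<Rightarrow> nat \<Rightarrow> real" where
  "ssum m g j = (\<Sum>i<j. m i + g i)"

definition mseq :: "(nat \<Rightarrow> real) \<Rightarrow> nat \<Rightarrow> real" where
  "mseq l j = (if even j then 0 else l (j div 2))"

lemma ssum_odd: "ssum (mseq l) g (Suc (2*j)) = ssum (mseq l) g (2*j) + g (2*j)"
  by (simp add: ssum_def mseq_def)

lemma ssum_even: "ssum (mseq l) g (2*Suc j) = ssum (mseq l) g (Suc (2*j)) + l j + g (Suc (2*j))"
  by (simp add: ssum_def mseq_def)

lemma ssum0: "ssum m g 0 = 0" by (simp add: ssum_def)


locale setup0 =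
  fixes f :: "real \<Rightarrow> 'a::metric_space \<Rightarrow> 'a" and p q :: 'a and \<delta> M T K :: real
  assumes q0: "f 0 q = q" and farorb: "\<forall>t\<ge>0. 4*\<delta> \<le> dist (f t p) q" and dpos: "\<delta> > 0"
    and M1: "1 \<le> M" and Tdef: "T = 5*M^3" and Kdef: "K = 2*M^2"
begin

lemma Tpos: "T > 0" using M1 Tdef by simp
lemma K2: "K \<ge> 2"
proof -
  have "M^2 \<ge> 1" using M1 by (simp add: one_le_power)
  thus ?thesis using Kdef by simp
qed

end

locale word = setup0 +
  fixes g :: "nat \<Rightarrow> real" and \<gamma> :: "real \<Rightarrow> real" and z :: "'a::metric_space" and l :: "nat \<Rightarrow> real" and n :: nat
  assumes rep: "reparametrization M \<gamma>" and gb: "\<forall>j<2*n. 0 \<le> g j \<and> g j \<le> M"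
    and sh: "shadowed f (2*n+1) (\<lambda>j. if even j then q else p) (mseq l) g \<gamma> \<delta> z"
    and lv: "\<forall>i. l i = T \<or> l i = K*T"
begin

abbreviation "S \<equiv> ssum (mseq l) g"

lemma lbounds: "T \<le> l i" "l i \<le> K*T" "0 \<le> l i"
  using lv[rule_format, of i] Tpos K2 by auto

lemma Sbound: "j \<le> n \<Longrightarrow> 0 \<le> S (2*j) \<and> S (2*j) \<le> j*(K*T+2*M)"
proof (induction j)
  case 0 thus ?case by (simp add: ssum0)
next
  case (Suc j)
  have g1: "0 \<le> g (2*j) \<and> g (2*j) \<le> M" using gb Suc.prems by auto
  have g2: "0 \<le> g (Suc (2*j)) \<and> g (Suc(2*j)) \<le> M" using gb Suc.prems by auto
  have "S (2*Suc j) = S (2*j) + g (2*j) + l j + g (Suc (2*j))"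
    using ssum_odd ssum_even by simp
  thus ?case using Suc g1 g2 lbounds[of j] by (simp add: algebra_simps)
qed

lemma Sodd_nn: "j < n \<Longrightarrow> 0 \<le> S (Suc (2*j))"
  using Sbound[of j] gb ssum_odd[of l g j] by auto

definition "tau j = \<gamma> (S (2*j))"
definition "aa j = \<gamma> (S (Suc (2*j)))"
definition "bb j = \<gamma> (S (Suc (2*j)) + l j)"

lemma tau0: "tau 0 = 0" using rep by (simp add: tau_def ssum0 reparametrization_def)

lemma geom:
  assumes "j < n"
  shows "tau j \<le> aa j" "aa j \<le> tau j + M*M" "aa j + l j / M \<le> bb j" "bb j \<le> aa j + M * l j"
    "bb j \<le> tau (Suc j)" "tau (Suc j) \<le> bb j + M*M"
proof -
  have s0: "0 \<le> S (2*j)" using Sbound[of j] assms by simp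
  have g1: "0 \<le> g (2*j) \<and> g (2*j) \<le> M" using gb assms by auto
  have g2: "0 \<le> g (Suc (2*j)) \<and> g (Suc(2*j)) \<le> M" using gb assms by auto
  have e1: "S (Suc (2*j)) = S (2*j) + g (2*j)" by (rule ssum_odd)
  have e2: "S (2*Suc j) = S (Suc (2*j)) + l j + g (Suc (2*j))" by (rule ssum_even)
  note lb = lbounds[of j]
  have r1: "(S (Suc (2*j)) - S (2*j))/M \<le> aa j - tau j \<and> aa j - tau j \<le> M*(S (Suc (2*j)) - S (2*j))"
    unfolding aa_def tau_def using rep_lip[OF rep s0, of "S (Suc (2*j))"] e1 g1 by simp
  have r2: "(l j)/M \<le> bb j - aa j \<and> bb j - aa j \<le> M*(l j)"
    unfolding aa_def bb_def using rep_lip[OF rep, of "S (Suc (2*j))" "S (Suc (2*j)) + l j"] e1 g1 s0 lb by simp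
  have r3: "(g (Suc (2*j)))/M \<le> tau (Suc j) - bb j \<and> tau (Suc j) - bb j \<le> M*(g (Suc (2*j)))"
    unfolding tau_def bb_def using rep_lip[OF rep, of "S (Suc (2*j)) + l j" "S (2*Suc j)"] e1 e2 g1 g2 s0 lb by simp
  have Mp: "M > 0" using M1 by simp
  have "0 \<le> (S (Suc (2*j)) - S (2*j))/M" using e1 g1 Mp by simp
  thus "tau j \<le> aa j" using r1 by simp
  have "M*(S (Suc (2*j)) - S (2*j)) \<le> M*M" using e1 g1 Mp by simp
  thus "aa j \<le> tau j + M*M" using r1 by simp
  show "aa j + l j / M \<le> bb j" "bb j \<le> aa j + M * l j" using r2 by simp_all
  have "0 \<le> g (Suc (2*j))/M" using g2 Mp by simp
  thus "bb j \<le> tau (Suc j)" using r3 by simp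
  have "M*(g (Suc (2*j))) \<le> M*M" using g2 Mp by simp
  thus "tau (Suc j) \<le> bb j + M*M" using r3 by simp
qed

lemma tau_step: "j < n \<Longrightarrow> tau j \<le> tau (Suc j)"
proof -
  assume a: "j < n"
  have "0 \<le> l j / M" using lbounds[of j] M1 by simp
  thus ?thesis using geom[OF a] by linarith
qed

lemma tau_mono: "j \<le> n \<Longrightarrow> tau j \<le> tau n"
proof -
  assume "j \<le> n"
  then obtain d where d: "n = j + d" using le_Suc_ex by blast
  have "j + d \<le> n \<Longrightarrow> tau j \<le> tau (j + d)" for d
  proof (induction d)
    case 0 thus ?case by simp
  next
    case (Suc d)
    hence "tau j \<le> tau (j+d)" by simp
    also have "\<dots> \<le> tau (Suc (j+d))" using tau_step Suc.prems by simp
    finally show ?case by simp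
  qed
  thus ?thesis using d by simp
qed

lemma tau_range: "j \<le> n \<Longrightarrow> 0 \<le> tau j \<and> tau j \<le> M*(n*(K*T+2*M))"
proof -
  assume a: "j \<le> n"
  have nn: "0 \<le> tau j" using rep Sbound[OF a] unfolding tau_def reparametrization_def by auto
  have sb: "0 \<le> S (2*n) \<and> S (2*n) \<le> n*(K*T+2*M)" using Sbound[of n] by simp
  have "tau n \<le> M * S (2*n)"
    using rep_lip[OF rep, of 0 "S (2*n)"] sb rep unfolding tau_def reparametrization_def by auto
  also have "\<dots> \<le> M*(n*(K*T+2*M))" using sb M1 by (intro mult_left_mono) auto
  finally show ?thesis using nn tau_mono[OF a] by simp
qed

lemma near: "j \<le> n \<Longrightarrow> dist (f (tau j) z) q < \<delta>"
proof -
  assume a: "j \<le> n"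
  have "2*j < 2*n+1" using a by simp
  moreover have "(0::real) \<in> {0..mseq l (2*j)}" by (simp add: mseq_def)
  ultimately have "dist (f (\<gamma> ((\<Sum>i<2*j. mseq l i + g i) + 0)) z) (f 0 ((\<lambda>j. if even j then q else p) (2*j))) < \<delta>"
    using sh unfolding shadowed_def by blast
  thus ?thesis by (simp add: tau_def ssum_def q0)
qed

lemma far:
  assumes j: "j < n" and u: "aa j \<le> u" "u \<le> bb j"
  shows "3*\<delta> < dist (f u z) q"
proof -
  let ?s = "S (Suc (2*j))"
  have s0: "0 \<le> ?s" using Sodd_nn[OF j] .
  have cont: "continuous_on {?s..?s + l j} \<gamma>"
    using rep s0 unfolding reparametrization_def by (auto intro: continuous_on_subset)
  obtain t where t: "?s \<le> t" "t \<le> ?s + l j" "\<gamma> t = u"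
    using IVT'[of \<gamma> ?s u "?s + l j"] u cont lbounds[of j] unfolding aa_def bb_def by auto
  have "Suc (2*j) < 2*n+1" using j by simp
  moreover have "t - ?s \<in> {0..mseq l (Suc (2*j))}" using t by (simp add: mseq_def)
  ultimately have "dist (f (\<gamma> ((\<Sum>i<Suc (2*j). mseq l i + g i) + (t - ?s))) z)
      (f (t - ?s) ((\<lambda>j. if even j then q else p) (Suc (2*j)))) < \<delta>"
    using sh unfolding shadowed_def by blast
  hence d1: "dist (f u z) (f (t - ?s) p) < \<delta>" using t by (simp add: ssum_def)
  have d2: "4*\<delta> \<le> dist (f (t - ?s) p) q" using farorb t by simp
  have "dist (f (t - ?s) p) q \<le> dist (f (t - ?s) p) (f u z) + dist (f u z) q" by (rule dist_triangle)
  thus ?thesis using d1 d2 by (simp add: dist_commute)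
qed

end

lemma matching:
  fixes \<tau> a b \<tau>' a' b' :: "nat \<Rightarrow> real"
  assumes "\<tau> 0 = 0" "\<tau>' 0 = 0" "2*C < L" "0 \<le> C"
  and H: "\<forall>j<n. \<tau> j \<le> a j \<and> a j \<le> \<tau> j + C \<and> a j + L \<le> b j \<and> b j \<le> \<tau> (Suc j) \<and> \<tau> (Suc j) \<le> b j + C"
  and H': "\<forall>j<n. \<tau>' j \<le> a' j \<and> a' j \<le> \<tau>' j + C \<and> a' j + L \<le> b' j \<and> b' j \<le> \<tau>' (Suc j) \<and> \<tau>' (Suc j) \<le> b' j + C"
  and A: "\<forall>j\<le>n. \<forall>i<n. \<not> (a i \<le> \<tau>' j \<and> \<tau>' j \<le> b i)"
  and A': "\<forall>j\<le>n. \<forall>i<n. \<not> (a' i \<le> \<tau> j \<and> \<tau> j \<le> b' i)"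
  shows "j \<le> n \<Longrightarrow> \<bar>\<tau> j - \<tau>' j\<bar> \<le> C"
proof (induction j)
  case 0 thus ?case using assms by simp
next
  case (Suc j)
  hence jn: "j < n" and ih: "\<bar>\<tau> j - \<tau>' j\<bar> \<le> C" by auto
  have h: "\<tau> j \<le> a j \<and> a j \<le> \<tau> j + C \<and> a j + L \<le> b j \<and> b j \<le> \<tau> (Suc j) \<and> \<tau> (Suc j) \<le> b j + C"
    using H jn by blast
  have h': "\<tau>' j \<le> a' j \<and> a' j \<le> \<tau>' j + C \<and> a' j + L \<le> b' j \<and> b' j \<le> \<tau>' (Suc j) \<and> \<tau>' (Suc j) \<le> b' j + C"
    using H' jn by blast
  have n1: "\<not> (a j \<le> \<tau>' (Suc j) \<and> \<tau>' (Suc j) \<le> b j)" using A Suc.prems jn by blast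
  have n2: "\<not> (a' j \<le> \<tau> (Suc j) \<and> \<tau> (Suc j) \<le> b' j)" using A' Suc.prems jn by blast
  have "a j < \<tau>' (Suc j)" using h h' ih assms(3) by linarith
  hence c1: "b j < \<tau>' (Suc j)" using n1 by linarith
  have "a' j < \<tau> (Suc j)" using h h' ih assms(3) by linarith
  hence c2: "b' j < \<tau> (Suc j)" using n2 by linarith
  show ?case using c1 c2 h h' by linarith
qed

lemma separation:
  assumes w1: "word f p q \<delta> M T K g \<gamma> z l n" and w2: "word f p q \<delta> M T K g' \<gamma>' z' l' n"
    and ns: "\<forall>s\<in>{0..M*(n*(K*T+2*M))}. dist (f s z) (f s z') \<le> \<delta>"
  shows "\<forall>i<n. l i = l' i"
proof -
  interpret w1: word f p q \<delta> M T K g \<gamma> z l n by (rule w1)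
  interpret w2: word f p q \<delta> M T K g' \<gamma>' z' l' n by (rule w2)
  have Mp: "M > 0" using w1.M1 by simp
  have TM: "T/M = 5*M*M" using w1.Tdef Mp by (simp add: power3_eq_cube)
  have MM: "M*M \<ge> 1" using w1.M1 by (metis mult_mono' mult_1 zero_le_one)
  define C where "C = M*M"
  define L where "L = T/M"
  have CL: "2*C < L" "0 \<le> C" unfolding C_def L_def TM using MM by auto
  have lL1: "w1.aa j + L \<le> w1.bb j" if "j < n" for j
  proof -
    have "T/M \<le> l j / M" using w1.lbounds(1)[of j] Mp by (simp add: divide_right_mono)
    thus ?thesis using w1.geom(3)[OF that] unfolding L_def by linarith
  qed
  have lL2: "w2.aa j + L \<le> w2.bb j" if "j < n" for j
  proof -
    have "T/M \<le> l' j / M" using w2.lbounds(1)[of j] Mp by (simp add: divide_right_mono)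
    thus ?thesis using w2.geom(3)[OF that] unfolding L_def by linarith
  qed
  have A: "\<forall>j\<le>n. \<forall>i<n. \<not> (w1.aa i \<le> w2.tau j \<and> w2.tau j \<le> w1.bb i)"
  proof (intro allI impI notI)
    fix j i assume j: "j \<le> n" and i: "i < n" and u: "w1.aa i \<le> w2.tau j \<and> w2.tau j \<le> w1.bb i"
    have "dist (f (w2.tau j) z) (f (w2.tau j) z') \<le> \<delta>" using ns w2.tau_range[OF j] by auto
    moreover have "dist (f (w2.tau j) z') q < \<delta>" using w2.near[OF j] .
    moreover have "dist (f (w2.tau j) z) q \<le> dist (f (w2.tau j) z) (f (w2.tau j) z') + dist (f (w2.tau j) z') q"
      by (rule dist_triangle)
    moreover have "3*\<delta> < dist (f (w2.tau j) z) q" using w1.far[OF i] u by auto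
    ultimately show False using w1.dpos by linarith
  qed
  have A': "\<forall>j\<le>n. \<forall>i<n. \<not> (w2.aa i \<le> w1.tau j \<and> w1.tau j \<le> w2.bb i)"
  proof (intro allI impI notI)
    fix j i assume j: "j \<le> n" and i: "i < n" and u: "w2.aa i \<le> w1.tau j \<and> w1.tau j \<le> w2.bb i"
    have "dist (f (w1.tau j) z) (f (w1.tau j) z') \<le> \<delta>" using ns w1.tau_range[OF j] by auto
    moreover have "dist (f (w1.tau j) z) q < \<delta>" using w1.near[OF j] .
    moreover have "dist (f (w1.tau j) z') q \<le> dist (f (w1.tau j) z') (f (w1.tau j) z) + dist (f (w1.tau j) z) q"
      by (rule dist_triangle)
    moreover have "3*\<delta> < dist (f (w1.tau j) z') q" using w2.far[OF i] u by auto
    ultimately show False using w1.dpos by (simp add: dist_commute)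
  qed
  have match: "\<bar>w1.tau j - w2.tau j\<bar> \<le> C" if "j \<le> n" for j
    apply (rule matching[of w1.tau w2.tau C L n w1.aa w1.bb w2.aa w2.bb])
    using w1.tau0 w2.tau0 CL w1.geom w2.geom lL1 lL2 A A' that unfolding C_def by auto
  show ?thesis
  proof (intro allI impI)
    fix i assume i: "i < n"
    have m1: "\<bar>w1.tau i - w2.tau i\<bar> \<le> C" and m2: "\<bar>w1.tau (Suc i) - w2.tau (Suc i)\<bar> \<le> C"
      using match i by auto
    have up1: "w1.tau (Suc i) - w1.tau i \<le> M * l i + 2*C" using w1.geom[OF i] unfolding C_def by linarith
    have lo1: "l i / M \<le> w1.tau (Suc i) - w1.tau i" using w1.geom[OF i] by linarith
    have up2: "w2.tau (Suc i) - w2.tau i \<le> M * l' i + 2*C" using w2.geom[OF i] unfolding C_def by linarith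
    have lo2: "l' i / M \<le> w2.tau (Suc i) - w2.tau i" using w2.geom[OF i] by linarith
    have KTM: "K*T/M = 2*M*T" using w1.Kdef Mp by (simp add: power2_eq_square)
    have T5: "T \<ge> 5*M" using w1.Tdef MM Mp by (simp add: power3_eq_cube)
    have key: "\<not> (M*T + 4*(M*M) \<ge> 2*M*T)"
    proof
      assume "M*T + 4*(M*M) \<ge> 2*M*T"
      hence "M*T \<le> M*(4*M)" by (simp add: algebra_simps)
      hence "T \<le> 4*M" using Mp by simp
      thus False using T5 Mp by simp
    qed
    show "l i = l' i"
    proof (rule ccontr)
      assume ne: "l i \<noteq> l' i"
      show False
      proof (cases "l i = T")
        case True
        hence "l' i = K*T" using ne w2.lv by metis
        thus False using True lo2 up1 m1 m2 KTM key unfolding C_def by (smt (verit))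
      next
        case False
        hence "l i = K*T" using w1.lv by metis
        moreover have "l' i = T" using ne w2.lv calculation by metis
        ultimately show False using lo1 up2 m1 m2 KTM key unfolding C_def by (smt (verit))
      qed
    qed
  qed
qed


theorem theorem1p1:
  fixes X :: "'a::metric_space set" and f :: "real \<Rightarrow> 'a \<Rightarrow> 'a"
  assumes "compact X"
    and "is_flow X f \<or> is_semiflow X f"
    and "weak_reparam_gluing X f"
  shows "minimal_flow X f \<or> top_entropy X f > 0"
proof (cases "minimal_flow X f")
  case True thus ?thesis by simp
next
  case False
  have f0: "\<forall>x\<in>X. f 0 x = x" using assms(2) unfolding is_flow_def is_semiflow_def by auto
  obtain p where pX: "p \<in> X" and np: "\<not> X \<subseteq> closure ((\<lambda>t. f t p) ` {0..})"
    using False unfolding minimal_flow_def by blast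
  obtain q where qX: "q \<in> X" and nq: "q \<notin> closure ((\<lambda>t. f t p) ` {0..})" using np by blast
  obtain e where e: "e > 0" "\<forall>y\<in>(\<lambda>t. f t p) ` {0..}. \<not> dist y q < e"
    using nq unfolding closure_approachable by blast
  define \<delta> where "\<delta> = e/4"
  have dpos: "\<delta> > 0" using e by (simp add: \<delta>_def)
  have "\<forall>t\<ge>0. e \<le> dist (f t p) q" using e(2) by (metis atLeast_iff imageI not_less)
  hence farorb: "\<forall>t\<ge>0. 4*\<delta> \<le> dist (f t p) q" by (simp add: \<delta>_def)
  obtain M where Mpos: "M > 0" and glue: "\<forall>k::nat. \<forall>x m. k \<ge> 1 \<longrightarrow> (\<forall>j<k. x j \<in> X \<and> m j \<ge> 0) \<longrightarrow>
        (\<exists>g \<gamma> z. (\<forall>j<k - 1. 0 \<le> g j \<and> g j \<le> M) \<and> reparametrization M \<gamma> \<and>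
                  z \<in> X \<and> shadowed f k x m g \<gamma> \<delta> z)"
    using assms(3) dpos unfolding weak_reparam_gluing_def by blast
  define T where "T = 5*M^3"
  define K where "K = 2*M^2"
  define lW where "lW W i = (if i \<in> W then K*T else T)" for W :: "nat set" and i :: nat
  define xs where "xs = (\<lambda>j::nat. if even j then q else p)"
  have Tp: "T > 0" using Mpos by (simp add: T_def)
  have Kp: "K > 0" using Mpos by (simp add: K_def)
  have ex: "\<forall>n W. \<exists>g \<gamma> z. (\<forall>j<2*n. 0 \<le> g j \<and> g j \<le> M) \<and> reparametrization M \<gamma> \<and>
                  z \<in> X \<and> shadowed f (2*n+1) xs (mseq (lW W)) g \<gamma> \<delta> z"
  proof (intro allI)
    fix n :: nat and W
    have "\<forall>j<2*n+1. xs j \<in> X \<and> mseq (lW W) j \<ge> 0"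
      using pX qX Tp Kp by (auto simp: xs_def mseq_def lW_def)
    thus "\<exists>g \<gamma> z. (\<forall>j<2*n. 0 \<le> g j \<and> g j \<le> M) \<and> reparametrization M \<gamma> \<and>
                  z \<in> X \<and> shadowed f (2*n+1) xs (mseq (lW W)) g \<gamma> \<delta> z"
      using glue[rule_format, of "2*n+1" xs "mseq (lW W)"] by simp
  qed
  obtain G \<Gamma> Z where GZ: "\<forall>n W. (\<forall>j<2*n. 0 \<le> G n W j \<and> G n W j \<le> M) \<and> reparametrization M (\<Gamma> n W) \<and>
                  Z n W \<in> X \<and> shadowed f (2*n+1) xs (mseq (lW W)) (G n W) (\<Gamma> n W) \<delta> (Z n W)"
    using ex by metis
  have M1: "1 \<le> M" using GZ unfolding reparametrization_def by blast
  have s0: "setup0 f p q \<delta> M T K"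
    unfolding setup0_def using f0 qX farorb dpos M1 T_def K_def by auto
  have wd: "word f p q \<delta> M T K (G n W) (\<Gamma> n W) (Z n W) (lW W) n" for n W
    unfolding word_def word_axioms_def using s0 GZ by (auto simp: xs_def lW_def)
  define tn where "tn n = M*(real n*(K*T+2*M))" for n :: nat
  define c where "c = ln 2 / (M*(K*T+2*M))"
  have cpos: "c > 0" unfolding c_def using Mpos Tp Kp by (intro divide_pos_pos mult_pos_pos add_pos_pos) auto
  have KT: "K*T \<noteq> T"
  proof -
    have "K \<ge> 2" using M1 unfolding K_def by (smt (verit) one_le_power)
    thus ?thesis using Tp by auto
  qed
  have sepW: "\<exists>s\<in>{0..tn n}. \<delta> < dist (f s (Z n W)) (f s (Z n W'))"
    if W: "W \<subseteq> {..<n}" "W' \<subseteq> {..<n}" "W \<noteq> W'" for n W W'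
  proof (rule ccontr)
    assume "\<not> ?thesis"
    hence ns: "\<forall>s\<in>{0..M*(real n*(K*T+2*M))}. dist (f s (Z n W)) (f s (Z n W')) \<le> \<delta>"
      unfolding tn_def by (auto simp: not_less)
    have "\<forall>i<n. lW W i = lW W' i" by (rule separation[OF wd wd ns])
    hence "\<forall>i<n. (i \<in> W) = (i \<in> W')" using KT unfolding lW_def by (metis (full_types))
    hence "W = W'" using W by blast
    thus False using W by simp
  qed
  have big: "ereal (2^n) \<le> max_sep X f (tn n) \<delta>" for n
  proof -
    define E where "E = Z n ` Pow {..<n}"
    have inj: "inj_on (Z n) (Pow {..<n})"
    proof (rule inj_onI)
      fix W W' assume a: "W \<in> Pow {..<n}" "W' \<in> Pow {..<n}" "Z n W = Z n W'"
      show "W = W'"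
      proof (rule ccontr)
        assume "W \<noteq> W'"
        then obtain s where "\<delta> < dist (f s (Z n W)) (f s (Z n W'))" using sepW a by blast
        thus False using a dpos by simp
      qed
    qed
    have cardE: "card E = 2^n" unfolding E_def using card_image[OF inj] by (simp add: card_Pow)
    have "separated_set X f (tn n) \<delta> E"
      unfolding separated_set_def E_def
    proof (intro conjI ballI impI)
      show "Z n ` Pow {..<n} \<subseteq> X" using GZ by auto
      show "finite (Z n ` Pow {..<n})" by simp
    next
      fix x y assume "x \<in> Z n ` Pow {..<n}" "y \<in> Z n ` Pow {..<n}" "x \<noteq> y"
      then obtain W W' where "W \<subseteq> {..<n}" "W' \<subseteq> {..<n}" "x = Z n W" "y = Z n W'" "W \<noteq> W'" by blast
      thus "\<exists>s\<in>{0..tn n}. \<delta> < dist (f s x) (f s y)" using sepW by blast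
    qed
    hence "ereal (real (card E)) \<le> max_sep X f (tn n) \<delta>"
      unfolding max_sep_def by (intro SUP_upper) auto
    thus ?thesis using cardE by simp
  qed
  have gr: "ereal c \<le> growth_rate (max_sep X f (tn n) \<delta>) (tn n)" if n1: "n \<ge> 1" for n
  proof (cases "max_sep X f (tn n) \<delta> = \<infinity>")
    case True thus ?thesis by (simp add: growth_rate_def)
  next
    case False
    define N where "N = max_sep X f (tn n) \<delta>"
    have b: "ereal (2^n) \<le> N" using big N_def by simp
    then obtain r where r: "N = ereal r" using False unfolding N_def[symmetric] by (cases N) (blast, blast, auto)
    have r2: "2^n \<le> r" using b r by simp
    have D: "M*(K*T+2*M) > 0" using Mpos Tp Kp by (intro mult_pos_pos add_pos_pos) auto
    have tnp: "tn n = real n * (M*(K*T+2*M))" unfolding tn_def by (simp add: algebra_simps)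
    have tpos: "tn n > 0" using tnp D n1 by simp
    have "(0::real) < 2^n" by simp
    hence rp: "0 < r" using r2 by linarith
    have "ln (2^n) \<le> ln r" using r2 rp by (subst ln_le_cancel_iff) auto
    hence "ln (2^n) / tn n \<le> ln r / tn n" using tpos by (simp add: divide_right_mono)
    moreover have "ln (2^n) / tn n = c" unfolding c_def tnp using n1 D by (simp add: ln_realpow)
    ultimately show ?thesis using r False unfolding growth_rate_def N_def[symmetric] by simp
  qed
  have "ereal c \<le> Limsup at_top (\<lambda>t. growth_rate (max_sep X f t \<delta>) t)"
    unfolding Limsup_def
  proof (rule INF_greatest)
    fix P :: "real \<Rightarrow> bool" assume "P \<in> {P. eventually P at_top}"
    hence "eventually P at_top" by simp
    then obtain N0 where N0: "\<forall>t\<ge>N0. P t" by (meson eventually_at_top_linorder)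
    have D: "M*(K*T+2*M) > 0" using Mpos Tp Kp by (intro mult_pos_pos add_pos_pos) auto
    obtain n :: nat where n: "max 1 (N0 / (M*(K*T+2*M))) < real n" using reals_Archimedean2 by blast
    have n1: "n \<ge> 1" using n by simp
    have "N0 / (M*(K*T+2*M)) < real n" using n by simp
    hence "N0 < real n * (M*(K*T+2*M))" using D by (simp add: divide_less_eq)
    hence "P (tn n)" using N0 unfolding tn_def by (simp add: algebra_simps)
    thus "ereal c \<le> (SUP t\<in>{t. P t}. growth_rate (max_sep X f t \<delta>) t)"
      using gr[OF n1] by (intro SUP_upper2[of "tn n"]) auto
  qed
  also have "\<dots> \<le> top_entropy X f"
    unfolding top_entropy_def using dpos by (intro SUP_upper) auto
  finally show ?thesis using cpos by (simp add: less_le_trans[of 0 "ereal c"])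
qed

end
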